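(* Let $\mathcal{P}$ be a parametrised propositional logic program over a finite alphabet $\Sigma=\Sigma_p\cup\Sigma_d$. If the parametrised well-founded model of $\mathcal{P}$ is exact, i.e. of the form $(\mathcal{A},\mathcal{A})$ for some symbolic interpretation $\mathcal{A}\in L^d_p$, then for every $\Sigma$-interpretation $J$: $J\models_{wf}\mathcal{P}$ if and only if $J\models\mathrm{Th}(\mathcal{A})$.
   Context: A parametrised logic program is a finite set of rules $h\leftarrow l_1\wedge\dots\wedge l_n$ with $h\in\Sigma_d$ and each $l_i$ an atom of $\Sigma$ or its negation; $\varphi_q$ is the disjunction of bodies of rules with head $q$. $L_p$: equivalence classes of propositional formulas over $\Sigma_p$ ordered by entailment; $L^d_p$: maps $\Sigma_d\to L_p$ ordered pointwise. For $\mathcal{S}=(\mathcal{A}_t,\mathcal{A}_p)\in(L^d_p)^2$, $\varphi^{\mathcal{S}}$ is computed by substituting $(\overline q,\overline q)$ for $q\in\Sigma_p$ and $(\mathcal{A}_t(q),\mathcal{A}_p(q))$ for $q\in\Sigma_d$, with $\wedge,\vee$ componentwise and $(\neg\psi)^{\mathcal{S}}=(\overline{\neg\psi_p},\overline{\neg\psi_t})$. $\Psi_{\mathcal{P}}(\mathcal{S})(q)=\varphi_q^{\mathcal{S}}$ and $\mathcal{T}_{\mathcal{P}}(\mathcal{A})(q)=\varphi_q^{(\mathcal{A},\mathcal{A})}$ (common component). For an operator $B$ on $M^2$ (precision order $(x,y)\leq_p(u,v)$ iff $x\leq u,v\leq y$), a partial $B$-stable fixpoint is $(x,y)$ with $x=\mathrm{lfp}(B(\cdot,y)_1)$,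 $y=\mathrm{lfp}(B(x,\cdot)_2)$, and the $B$-well-founded fixpoint is the least precise one. The parametrised well-founded model of $\mathcal{P}$ is the $\Psi_{\mathcal{P}}$-well-founded fixpoint of $\mathcal{T}_{\mathcal{P}}$. $\mathrm{Th}(\mathcal{A})=\bigwedge_{q\in\Sigma_d}(q\leftrightarrow\psi_q)$ with $\psi_q$ a representative of $\mathcal{A}(q)$. For $I\in 2^{\Sigma_p}$, $T^I_{\mathcal{P}}$ is the immediate consequence operator on $2^{\Sigma_d}$ with $\Sigma_p$ fixed to $I$ and $\Psi^I_{\mathcal{P}}$ Fitting's three-valued operator on pairs of $\Sigma_d$-interpretations with $\Sigma_p$ fixed to $I$. $J\models_{wf}\mathcal{P}$ iff $(J\cap\Sigma_d,J\cap\Sigma_d)$ is the $\Psi^{J\cap\Sigma_p}_{\mathcal{P}}$-well-founded fixpoint of $T^{J\cap\Sigma_p}_{\mathcal{P}}$. *)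

theory Defs
  imports Main
begin

datatype 'a form = Atom 'a | Neg "'a form" | Conj "'a form" "'a form"
  | Disj "'a form" "'a form" | Top | Bot

fun atoms :: "'a form \<Rightarrow> 'a set" where
  "atoms (Atom q) = {q}"
| "atoms (Neg f) = atoms f"
| "atoms (Conj f g) = atoms f \<union> atoms g"
| "atoms (Disj f g) = atoms f \<union> atoms g"
| "atoms Top = {}"
| "atoms Bot = {}"

fun sem :: "'a set \<Rightarrow> 'a form \<Rightarrow> bool" where
  "sem I (Atom q) = (q \<in> I)"
| "sem I (Neg f) = (\<not> sem I f)"
| "sem I (Conj f g) = (sem I f \<and> sem I g)"
| "sem I (Disj f g) = (sem I f \<or> sem I g)"
| "sem I Top = True"
| "sem I Bot = False"

definition cls :: "'a set \<Rightarrow> 'a form \<Rightarrow> 'a form set" where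
  "cls SP f = {g. atoms g \<subseteq> SP \<and> (\<forall>I\<subseteq>SP. sem I g = sem I f)}"

definition Lp :: "'a set \<Rightarrow> 'a form set set" where
  "Lp SP = {cls SP f | f. atoms f \<subseteq> SP}"

definition leq_Lp :: "'a set \<Rightarrow> 'a form set \<Rightarrow> 'a form set \<Rightarrow> bool" where
  "leq_Lp SP X Y \<longleftrightarrow> (\<forall>f\<in>X. \<forall>g\<in>Y. \<forall>I\<subseteq>SP. sem I f \<longrightarrow> sem I g)"

definition rep :: "'a form set \<Rightarrow> 'a form" where
  "rep X = (SOME f. f \<in> X)"

definition Ldp :: "'a set \<Rightarrow> 'a set \<Rightarrow> ('a \<Rightarrow> 'a form set) set" where
  "Ldp SP SD = {A. (\<forall>q\<in>SD. A q \<in> Lp SP) \<and> (\<forall>q. q \<notin> SD \<longrightarrow> A q = {})}"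

definition leq_Ldp :: "'a set \<Rightarrow> 'a set \<Rightarrow> ('a \<Rightarrow> 'a form set) \<Rightarrow> ('a \<Rightarrow> 'a form set) \<Rightarrow> bool" where
  "leq_Ldp SP SD A B \<longleftrightarrow> (\<forall>q\<in>SD. leq_Lp SP (A q) (B q))"

(* a literal: atom with polarity (True = positive); a rule: head and body *)
type_synonym 'a rule = "'a \<times> ('a \<times> bool) list"
type_synonym 'a program = "'a rule list"

definition wf_program :: "'a set \<Rightarrow> 'a set \<Rightarrow> 'a program \<Rightarrow> bool" where
  "wf_program SP SD Prog \<longleftrightarrow>
     (\<forall>(h, body) \<in> set Prog. h \<in> SD \<and> (\<forall>(a, b) \<in> set body. a \<in> SP \<union> SD))"

definition lit_form :: "'a \<times> bool \<Rightarrow> 'a form" where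
  "lit_form l = (if snd l then Atom (fst l) else Neg (Atom (fst l)))"

definition body_form :: "('a \<times> bool) list \<Rightarrow> 'a form" where
  "body_form body = foldr (\<lambda>l f. Conj (lit_form l) f) body Top"

definition phi :: "'a program \<Rightarrow> 'a \<Rightarrow> 'a form" where
  "phi Prog q = foldr (\<lambda>r f. Disj (body_form (snd r)) f) (filter (\<lambda>r. fst r = q) Prog) Bot"

fun ev :: "'a set \<Rightarrow> ('a \<Rightarrow> 'a form set) \<times> ('a \<Rightarrow> 'a form set) \<Rightarrow> 'a form \<Rightarrow> 'a form \<times> 'a form" where
  "ev SD S (Atom q) = (if q \<in> SD then (rep (fst S q), rep (snd S q)) else (Atom q, Atom q))"
| "ev SD S (Neg f) = (case ev SD S f of (t, p) \<Rightarrow> (Neg p, Neg t))"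
| "ev SD S (Conj f g) = (case ev SD S f of (t1, p1) \<Rightarrow> case ev SD S g of (t2, p2) \<Rightarrow> (Conj t1 t2, Conj p1 p2))"
| "ev SD S (Disj f g) = (case ev SD S f of (t1, p1) \<Rightarrow> case ev SD S g of (t2, p2) \<Rightarrow> (Disj t1 t2, Disj p1 p2))"
| "ev SD S Top = (Top, Top)"
| "ev SD S Bot = (Bot, Bot)"

definition PsiP :: "'a set \<Rightarrow> 'a set \<Rightarrow> 'a program \<Rightarrow>
    ('a \<Rightarrow> 'a form set) \<times> ('a \<Rightarrow> 'a form set) \<Rightarrow> ('a \<Rightarrow> 'a form set) \<times> ('a \<Rightarrow> 'a form set)" where
  "PsiP SP SD Prog S =
     ((\<lambda>q. if q \<in> SD then cls SP (fst (ev SD S (phi Prog q))) else {}),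
      (\<lambda>q. if q \<in> SD then cls SP (snd (ev SD S (phi Prog q))) else {}))"

definition TP :: "'a set \<Rightarrow> 'a set \<Rightarrow> 'a program \<Rightarrow> ('a \<Rightarrow> 'a form set) \<Rightarrow> ('a \<Rightarrow> 'a form set)" where
  "TP SP SD Prog A = fst (PsiP SP SD Prog (A, A))"

definition is_lfp :: "'m set \<Rightarrow> ('m \<Rightarrow> 'm \<Rightarrow> bool) \<Rightarrow> ('m \<Rightarrow> 'm) \<Rightarrow> 'm \<Rightarrow> bool" where
  "is_lfp C le f x \<longleftrightarrow> x \<in> C \<and> f x = x \<and> (\<forall>y\<in>C. f y = y \<longrightarrow> le x y)"

definition prec_le :: "('m \<Rightarrow> 'm \<Rightarrow> bool) \<Rightarrow> 'm \<times> 'm \<Rightarrow> 'm \<times> 'm \<Rightarrow> bool" where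
  "prec_le le p q \<longleftrightarrow> le (fst p) (fst q) \<and> le (snd q) (snd p)"

definition partial_stable :: "'m set \<Rightarrow> ('m \<Rightarrow> 'm \<Rightarrow> bool) \<Rightarrow> ('m \<times> 'm \<Rightarrow> 'm \<times> 'm) \<Rightarrow> 'm \<times> 'm \<Rightarrow> bool" where
  "partial_stable C le B p \<longleftrightarrow>
     is_lfp C le (\<lambda>x. fst (B (x, snd p))) (fst p) \<and>
     is_lfp C le (\<lambda>y. snd (B (fst p, y))) (snd p)"

definition well_founded_fp :: "'m set \<Rightarrow> ('m \<Rightarrow> 'm \<Rightarrow> bool) \<Rightarrow> ('m \<times> 'm \<Rightarrow> 'm \<times> 'm) \<Rightarrow> 'm \<times> 'm \<Rightarrow> bool" where
  "well_founded_fp C le B p \<longleftrightarrow>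
     partial_stable C le B p \<and> (\<forall>q. partial_stable C le B q \<longrightarrow> prec_le le p q)"

definition param_wf_model :: "'a set \<Rightarrow> 'a set \<Rightarrow> 'a program \<Rightarrow>
    ('a \<Rightarrow> 'a form set) \<times> ('a \<Rightarrow> 'a form set) \<Rightarrow> bool" where
  "param_wf_model SP SD Prog S \<longleftrightarrow> well_founded_fp (Ldp SP SD) (leq_Ldp SP SD) (PsiP SP SD Prog) S"

definition TPI :: "'a set \<Rightarrow> 'a program \<Rightarrow> 'a set \<Rightarrow> 'a set \<Rightarrow> 'a set" where
  "TPI SD Prog I X = {q \<in> SD. sem (I \<union> X) (phi Prog q)}"

(* Fitting's three-valued operator Psi^I_P on pairs (X,Y) (lower, upper) *)
definition PsiPI :: "'a set \<Rightarrow> 'a program \<Rightarrow> 'a set \<Rightarrow> 'a set \<times> 'a set \<Rightarrow> 'a set \<times> 'a set" where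
  "PsiPI SD Prog I XY =
     ({q \<in> SD. \<exists>(h, body) \<in> set Prog. h = q \<and>
         (\<forall>(a, b) \<in> set body. if b then a \<in> I \<union> fst XY else a \<notin> I \<union> snd XY)},
      {q \<in> SD. \<exists>(h, body) \<in> set Prog. h = q \<and>
         (\<forall>(a, b) \<in> set body. if b then a \<in> I \<union> snd XY else a \<notin> I \<union> fst XY)})"

definition wf_models :: "'a set \<Rightarrow> 'a set \<Rightarrow> 'a program \<Rightarrow> 'a set \<Rightarrow> bool" where
  "wf_models SP SD Prog J \<longleftrightarrow>
     well_founded_fp (Pow SD) (\<subseteq>) (PsiPI SD Prog (J \<inter> SP)) (J \<inter> SD, J \<inter> SD)"

(* J |= Th(A), Th(A) = /\_{q in Sigma_d} (q <-> psi_q), psi_q a representative of A(q) *)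
definition models_Th :: "'a set \<Rightarrow> 'a set \<Rightarrow> ('a \<Rightarrow> 'a form set) \<Rightarrow> bool" where
  "models_Th SD J A \<longleftrightarrow> (\<forall>q\<in>SD. (q \<in> J) = sem J (rep (A q)))"

end

theory Submission
  imports Defs
begin


definition evI :: "'a set \<Rightarrow> 'a set \<Rightarrow> ('a \<Rightarrow> 'a form set) \<Rightarrow> 'a set" where
  "evI SD I Z = {q\<in>SD. sem I (rep (Z q))}"

declare ev.simps(2-4)[simp del]

lemma ev_Neg[simp]: "ev SD S (Neg f) = (Neg (snd (ev SD S f)), Neg (fst (ev SD S f)))"
  by (simp add: ev.simps split: prod.split)
lemma ev_Conj[simp]: "ev SD S (Conj f g) = (Conj (fst (ev SD S f)) (fst (ev SD S g)), Conj (snd (ev SD S f)) (snd (ev SD S g)))"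
  by (simp add: ev.simps split: prod.split)
lemma ev_Disj[simp]: "ev SD S (Disj f g) = (Disj (fst (ev SD S f)) (fst (ev SD S g)), Disj (snd (ev SD S f)) (snd (ev SD S g)))"
  by (simp add: ev.simps split: prod.split)

lemma sem_restrict: "atoms f \<subseteq> S \<Longrightarrow> sem J f = sem (J \<inter> S) f"
  by (induction f) auto

lemma rep_cls: "atoms f \<subseteq> SP \<Longrightarrow> rep (cls SP f) \<in> cls SP f"
  unfolding rep_def by (rule someI[of _ f]) (simp add: cls_def)

lemma cls_mem: "g \<in> cls SP f \<Longrightarrow> atoms g \<subseteq> SP \<and> (\<forall>I\<subseteq>SP. sem I g = sem I f)"
  by (simp add: cls_def)

lemma sem_rep_cls: "atoms f \<subseteq> SP \<Longrightarrow> I \<subseteq> SP \<Longrightarrow> sem I (rep (cls SP f)) = sem I f"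
  using rep_cls cls_mem by blast

lemma cls_eq: "(\<forall>I\<subseteq>SP. sem I f = sem I g) \<Longrightarrow> cls SP f = cls SP g"
  by (auto simp: cls_def)

lemma Ldp_rep:
  assumes "Z \<in> Ldp SP SD" "q \<in> SD"
  shows "rep (Z q) \<in> Z q \<and> atoms (rep (Z q)) \<subseteq> SP \<and> Z q = cls SP (rep (Z q))"
proof -
  obtain f where f: "atoms f \<subseteq> SP" "Z q = cls SP f" using assms by (auto simp: Ldp_def Lp_def)
  have m: "rep (Z q) \<in> Z q" using f rep_cls by metis
  then have "atoms (rep (Z q)) \<subseteq> SP \<and> (\<forall>I\<subseteq>SP. sem I (rep (Z q)) = sem I f)"
    using f cls_mem by metis
  then show ?thesis using m f cls_eq by metis
qed

lemma Ldp_out: "Z \<in> Ldp SP SD \<Longrightarrow> q \<notin> SD \<Longrightarrow> Z q = {}"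
  by (simp add: Ldp_def)

lemma Ldp_eq:
  assumes "X \<in> Ldp SP SD" "Y \<in> Ldp SP SD" "\<forall>I\<subseteq>SP. evI SD I X = evI SD I Y"
  shows "X = Y"
proof
  fix q show "X q = Y q"
  proof (cases "q \<in> SD")
    case True
    have "\<forall>I\<subseteq>SP. sem I (rep (X q)) = sem I (rep (Y q))"
    proof (intro allI impI)
      fix I assume "I \<subseteq> SP"
      then have "(q \<in> evI SD I X) = (q \<in> evI SD I Y)" using assms by simp
      then show "sem I (rep (X q)) = sem I (rep (Y q))" using True by (simp add: evI_def)
    qed
    then show ?thesis using Ldp_rep[OF assms(1) True] Ldp_rep[OF assms(2) True] cls_eq by metis
  next
    case False then show ?thesis using assms Ldp_out by metis
  qed
qed

lemma Ldp_le:
  assumes "X \<in> Ldp SP SD" "Y \<in> Ldp SP SD"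
  shows "leq_Ldp SP SD X Y \<longleftrightarrow> (\<forall>I\<subseteq>SP. evI SD I X \<subseteq> evI SD I Y)"
proof
  assume h: "leq_Ldp SP SD X Y"
  show "\<forall>I\<subseteq>SP. evI SD I X \<subseteq> evI SD I Y"
  proof (intro allI impI subsetI)
    fix I q assume I: "I \<subseteq> SP" and q: "q \<in> evI SD I X"
    then have qs: "q \<in> SD" and s: "sem I (rep (X q))" by (auto simp: evI_def)
    have "leq_Lp SP (X q) (Y q)" using h qs by (simp add: leq_Ldp_def)
    then have "sem I (rep (Y q))" using Ldp_rep[OF assms(1) qs] Ldp_rep[OF assms(2) qs] I s
      unfolding leq_Lp_def by blast
    then show "q \<in> evI SD I Y" using qs by (simp add: evI_def)
  qed
next
  assume h: "\<forall>I\<subseteq>SP. evI SD I X \<subseteq> evI SD I Y"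
  show "leq_Ldp SP SD X Y" unfolding leq_Ldp_def leq_Lp_def
  proof (intro ballI allI impI)
    fix q f g I assume qs: "q \<in> SD" and f: "f \<in> X q" and g: "g \<in> Y q" and I: "I \<subseteq> SP" and sf: "sem I f"
    have "f \<in> cls SP (rep (X q))" using f Ldp_rep[OF assms(1) qs] by metis
    then have "sem I (rep (X q))" using cls_mem I sf by metis
    then have "q \<in> evI SD I X" using qs by (simp add: evI_def)
    then have "q \<in> evI SD I Y" using h I by blast
    then have "sem I (rep (Y q))" by (simp add: evI_def)
    moreover have "g \<in> cls SP (rep (Y q))" using g Ldp_rep[OF assms(2) qs] by metis
    ultimately show "sem I g" using cls_mem I by metis
  qed
qed

lemma lit_ev:
  assumes "I \<subseteq> SP" "SP \<inter> SD = {}" "a \<in> SP \<union> SD"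
  shows "sem I (fst (ev SD (X,Y) (lit_form (a,b)))) = (if b then a \<in> I \<union> evI SD I X else a \<notin> I \<union> evI SD I Y)"
    and "sem I (snd (ev SD (X,Y) (lit_form (a,b)))) = (if b then a \<in> I \<union> evI SD I Y else a \<notin> I \<union> evI SD I X)"
  using assms by (auto simp: lit_form_def evI_def)

lemma body_ev0:
  assumes "I \<subseteq> SP" "SP \<inter> SD = {}"
  shows "(\<forall>(a,b)\<in>set body. a \<in> SP \<union> SD) \<Longrightarrow>
    (sem I (fst (ev SD (X,Y) (body_form body))) = (\<forall>(a,b)\<in>set body. if b then a \<in> I \<union> evI SD I X else a \<notin> I \<union> evI SD I Y))
   \<and> (sem I (snd (ev SD (X,Y) (body_form body))) = (\<forall>(a,b)\<in>set body. if b then a \<in> I \<union> evI SD I Y else a \<notin> I \<union> evI SD I X))"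
proof (induction body)
  case Nil
  then show ?case by (simp add: body_form_def)
next
  case (Cons l body)
  obtain a b where l: "l = (a,b)" by (cases l)
  have a: "a \<in> SP \<union> SD" using Cons.prems l by auto
  have ih: "(sem I (fst (ev SD (X,Y) (body_form body))) = (\<forall>(a,b)\<in>set body. if b then a \<in> I \<union> evI SD I X else a \<notin> I \<union> evI SD I Y))
   \<and> (sem I (snd (ev SD (X,Y) (body_form body))) = (\<forall>(a,b)\<in>set body. if b then a \<in> I \<union> evI SD I Y else a \<notin> I \<union> evI SD I X))"
    using Cons by auto
  have bf: "body_form (l # body) = Conj (lit_form (a,b)) (body_form body)" using l by (simp add: body_form_def)
  show ?case unfolding bf using ih lit_ev[OF assms a, of X Y b] l by simp
qed

lemma body_ev:
  assumes "I \<subseteq> SP" "SP \<inter> SD = {}" "\<forall>(a,b)\<in>set body. a \<in> SP \<union> SD"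
  shows "sem I (fst (ev SD (X,Y) (body_form body))) = (\<forall>(a,b)\<in>set body. if b then a \<in> I \<union> evI SD I X else a \<notin> I \<union> evI SD I Y)"
    and "sem I (snd (ev SD (X,Y) (body_form body))) = (\<forall>(a,b)\<in>set body. if b then a \<in> I \<union> evI SD I Y else a \<notin> I \<union> evI SD I X)"
  using body_ev0[OF assms(1,2) assms(3)] by auto

lemma phi_ev:
  "sem I (fst (ev SD S (foldr (\<lambda>r f. Disj (body_form (snd r)) f) rs Bot))) = (\<exists>r\<in>set rs. sem I (fst (ev SD S (body_form (snd r)))))"
  "sem I (snd (ev SD S (foldr (\<lambda>r f. Disj (body_form (snd r)) f) rs Bot))) = (\<exists>r\<in>set rs. sem I (snd (ev SD S (body_form (snd r)))))"
  by (induction rs) auto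

lemma atoms_body: "atoms (body_form body) = fst ` set body"
  by (induction body) (auto simp: body_form_def lit_form_def)

lemma atoms_phi: "wf_program SP SD Prog \<Longrightarrow> atoms (phi Prog q) \<subseteq> SP \<union> SD"
proof -
  have "atoms (foldr (\<lambda>r f. Disj (body_form (snd r)) f) rs Bot) = (\<Union>r\<in>set rs. fst ` set (snd r))" for rs :: "'a rule list"
    by (induction rs) (auto simp: atoms_body)
  then show "wf_program SP SD Prog \<Longrightarrow> atoms (phi Prog q) \<subseteq> SP \<union> SD"
    unfolding phi_def wf_program_def by fastforce
qed

lemma atoms_ev:
  assumes "X \<in> Ldp SP SD" "Y \<in> Ldp SP SD"
  shows "atoms f \<subseteq> SP \<union> SD \<Longrightarrow> atoms (fst (ev SD (X,Y) f)) \<subseteq> SP \<and> atoms (snd (ev SD (X,Y) f)) \<subseteq> SP"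
proof (induction f)
  case (Atom q)
  then show ?case using Ldp_rep[OF assms(1), of q] Ldp_rep[OF assms(2), of q] by auto
qed auto



lemma Psi_in:
  assumes "X \<in> Ldp SP SD" "Y \<in> Ldp SP SD" "wf_program SP SD Prog"
  shows "fst (PsiP SP SD Prog (X,Y)) \<in> Ldp SP SD" "snd (PsiP SP SD Prog (X,Y)) \<in> Ldp SP SD"
  using atoms_ev[OF assms(1,2) atoms_phi[OF assms(3)]]
  by (auto simp: PsiP_def Ldp_def Lp_def)

lemma Psi_ev:
  assumes "X \<in> Ldp SP SD" "Y \<in> Ldp SP SD" "wf_program SP SD Prog" "I \<subseteq> SP" "SP \<inter> SD = {}"
  shows "evI SD I (fst (PsiP SP SD Prog (X,Y))) = fst (PsiPI SD Prog I (evI SD I X, evI SD I Y))"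
    "evI SD I (snd (PsiP SP SD Prog (X,Y))) = snd (PsiPI SD Prog I (evI SD I X, evI SD I Y))"
proof -
  have at: "atoms (fst (ev SD (X,Y) (phi Prog q))) \<subseteq> SP \<and> atoms (snd (ev SD (X,Y) (phi Prog q))) \<subseteq> SP" for q
    using atoms_ev[OF assms(1,2) atoms_phi[OF assms(3)]] by blast
  have wb: "r \<in> set Prog \<Longrightarrow> \<forall>(a,b)\<in>set (snd r). a \<in> SP \<union> SD" for r
    using assms(3) unfolding wf_program_def by fastforce
  have e1: "sem I (fst (ev SD (X,Y) (phi Prog q))) = (\<exists>(h, body) \<in> set Prog. h = q \<and>
         (\<forall>(a, b) \<in> set body. if b then a \<in> I \<union> evI SD I X else a \<notin> I \<union> evI SD I Y))" for q
    unfolding phi_def phi_ev using body_ev(1)[OF assms(4,5) wb] by fastforce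
  have e2: "sem I (snd (ev SD (X,Y) (phi Prog q))) = (\<exists>(h, body) \<in> set Prog. h = q \<and>
         (\<forall>(a, b) \<in> set body. if b then a \<in> I \<union> evI SD I Y else a \<notin> I \<union> evI SD I X))" for q
    unfolding phi_def phi_ev using body_ev(2)[OF assms(4,5) wb] by fastforce
  show "evI SD I (fst (PsiP SP SD Prog (X,Y))) = fst (PsiPI SD Prog I (evI SD I X, evI SD I Y))"
    unfolding PsiPI_def fst_conv using e1 sem_rep_cls[OF conjunct1[OF at] assms(4)]
    by (auto simp add: PsiP_def evI_def[of SD I "\<lambda>q. if q \<in> SD then _ q else {}"])
  show "evI SD I (snd (PsiP SP SD Prog (X,Y))) = snd (PsiPI SD Prog I (evI SD I X, evI SD I Y))"
    unfolding PsiPI_def snd_conv using e2 sem_rep_cls[OF conjunct2[OF at] assms(4)]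
    by (auto simp add: PsiP_def evI_def[of SD I "\<lambda>q. if q \<in> SD then _ q else {}"])
qed

definition chi :: "'a list \<Rightarrow> 'a set \<Rightarrow> 'a form" where
  "chi xs I = foldr (\<lambda>p f. Conj (if p \<in> I then Atom p else Neg (Atom p)) f) xs Top"

lemma sem_chi: "sem J (chi xs I) = (\<forall>p\<in>set xs. p\<in>J \<longleftrightarrow> p\<in>I)"
  by (induction xs) (auto simp: chi_def)

lemma atoms_chi: "atoms (chi xs I) \<subseteq> set xs"
  by (induction xs) (auto simp: chi_def)

lemma glue:
  assumes "finite SP" "Z \<in> Ldp SP SD" "I \<subseteq> SP" "z \<subseteq> SD"
  shows "\<exists>W\<in>Ldp SP SD. evI SD I W = z \<and> (\<forall>J\<subseteq>SP. J \<noteq> I \<longrightarrow> evI SD J W = evI SD J Z)"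
proof -
  obtain xs where xs: "set xs = SP" using finite_list assms(1) by blast
  define g where "g q = Disj (Conj (chi xs I) (if q \<in> z then Top else Bot)) (Conj (Neg (chi xs I)) (rep (Z q)))" for q
  define W where "W q = (if q \<in> SD then cls SP (g q) else {})" for q
  have ag: "q \<in> SD \<Longrightarrow> atoms (g q) \<subseteq> SP" for q
    using atoms_chi[of xs I] xs Ldp_rep[OF assms(2), of q] by (auto simp: g_def)
  have W: "W \<in> Ldp SP SD" using ag by (auto simp: W_def Ldp_def Lp_def)
  have ch: "J \<subseteq> SP \<Longrightarrow> sem J (chi xs I) = (J = I)" for J
    using assms(3) xs by (auto simp: sem_chi)
  have eW: "J \<subseteq> SP \<Longrightarrow> evI SD J W = {q\<in>SD. sem J (g q)}" for J
  proof -
    assume J: "J \<subseteq> SP"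
    have "q \<in> SD \<Longrightarrow> sem J (rep (cls SP (g q))) = sem J (g q)" for q
      using sem_rep_cls[OF ag J] by blast
    then show ?thesis by (auto simp: evI_def W_def)
  qed
  have "evI SD I W = z" using eW[OF assms(3)] ch[OF assms(3)] assms(4) by (auto simp: g_def)
  moreover have "\<forall>J\<subseteq>SP. J \<noteq> I \<longrightarrow> evI SD J W = evI SD J Z"
    using eW ch by (auto simp: g_def evI_def)
  ultimately show ?thesis using W by blast
qed

context
  fixes SP SD :: "'a set" and Prog :: "'a program" and A :: "'a \<Rightarrow> 'a form set"
  assumes fin: "finite SP" and disj: "SP \<inter> SD = {}"
    and wfp: "wf_program SP SD Prog"
    and AL: "A \<in> Ldp SP SD"
    and wfm: "param_wf_model SP SD Prog (A, A)"
begin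

lemma A_lfp1: "is_lfp (Ldp SP SD) (leq_Ldp SP SD) (\<lambda>x. fst (PsiP SP SD Prog (x, A))) A"
  using wfm by (simp add: param_wf_model_def well_founded_fp_def partial_stable_def)
lemma A_lfp2: "is_lfp (Ldp SP SD) (leq_Ldp SP SD) (\<lambda>y. snd (PsiP SP SD Prog (A, y))) A"
  using wfm by (simp add: param_wf_model_def well_founded_fp_def partial_stable_def)
lemma A_least: "partial_stable (Ldp SP SD) (leq_Ldp SP SD) (PsiP SP SD Prog) q \<Longrightarrow> prec_le (leq_Ldp SP SD) (A,A) q"
  using wfm unfolding param_wf_model_def well_founded_fp_def by (metis prod.collapse)

lemma A_fix1: "fst (PsiP SP SD Prog (A, A)) = A" using A_lfp1 by (simp add: is_lfp_def)
lemma A_fix2: "snd (PsiP SP SD Prog (A, A)) = A" using A_lfp2 by (simp add: is_lfp_def)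

lemma eA_fix:
  assumes "J \<subseteq> SP"
  shows "fst (PsiPI SD Prog J (evI SD J A, evI SD J A)) = evI SD J A"
    "snd (PsiPI SD Prog J (evI SD J A, evI SD J A)) = evI SD J A"
  using Psi_ev[OF AL AL wfp assms disj] A_fix1 A_fix2 by auto

lemma evI_sub: "evI SD I Z \<subseteq> SD" by (auto simp: evI_def)

lemma P1:
  assumes I: "I \<subseteq> SP"
  shows "is_lfp (Pow SD) (\<subseteq>) (\<lambda>x. fst (PsiPI SD Prog I (x, evI SD I A))) (evI SD I A)"
    "is_lfp (Pow SD) (\<subseteq>) (\<lambda>x. snd (PsiPI SD Prog I (evI SD I A, x))) (evI SD I A)"
proof -
  show "is_lfp (Pow SD) (\<subseteq>) (\<lambda>x. fst (PsiPI SD Prog I (x, evI SD I A))) (evI SD I A)"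
    unfolding is_lfp_def
  proof (intro conjI ballI impI)
    show "evI SD I A \<in> Pow SD" using evI_sub by blast
    show "fst (PsiPI SD Prog I (evI SD I A, evI SD I A)) = evI SD I A" using eA_fix I by blast
    fix y assume y: "y \<in> Pow SD" and fy: "fst (PsiPI SD Prog I (y, evI SD I A)) = y"
    obtain W where W: "W \<in> Ldp SP SD" "evI SD I W = y" "\<forall>J\<subseteq>SP. J \<noteq> I \<longrightarrow> evI SD J W = evI SD J A"
      using glue[OF fin AL I] y by blast
    have "fst (PsiP SP SD Prog (W, A)) = W"
    proof (rule Ldp_eq[OF Psi_in(1)[OF W(1) AL wfp] W(1)], intro allI impI)
      fix J assume J: "J \<subseteq> SP"
      show "evI SD J (fst (PsiP SP SD Prog (W, A))) = evI SD J W"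
      proof (cases "J = I")
        case True then show ?thesis using Psi_ev(1)[OF W(1) AL wfp J disj] W(2) fy by simp
      next
        case False then have "evI SD J W = evI SD J A" using W(3) J by auto
        then show ?thesis using Psi_ev(1)[OF W(1) AL wfp J disj] eA_fix[OF J] by simp
      qed
    qed
    then have "leq_Ldp SP SD A W" using A_lfp1 W(1) by (simp add: is_lfp_def)
    then show "evI SD I A \<subseteq> y" using Ldp_le[OF AL W(1)] I W(2) by blast
  qed
  show "is_lfp (Pow SD) (\<subseteq>) (\<lambda>x. snd (PsiPI SD Prog I (evI SD I A, x))) (evI SD I A)"
    unfolding is_lfp_def
  proof (intro conjI ballI impI)
    show "evI SD I A \<in> Pow SD" using evI_sub by blast
    show "snd (PsiPI SD Prog I (evI SD I A, evI SD I A)) = evI SD I A" using eA_fix I by blast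
    fix y assume y: "y \<in> Pow SD" and fy: "snd (PsiPI SD Prog I (evI SD I A, y)) = y"
    obtain W where W: "W \<in> Ldp SP SD" "evI SD I W = y" "\<forall>J\<subseteq>SP. J \<noteq> I \<longrightarrow> evI SD J W = evI SD J A"
      using glue[OF fin AL I] y by blast
    have "snd (PsiP SP SD Prog (A, W)) = W"
    proof (rule Ldp_eq[OF Psi_in(2)[OF AL W(1) wfp] W(1)], intro allI impI)
      fix J assume J: "J \<subseteq> SP"
      show "evI SD J (snd (PsiP SP SD Prog (A, W))) = evI SD J W"
      proof (cases "J = I")
        case True then show ?thesis using Psi_ev(2)[OF AL W(1) wfp J disj] W(2) fy by simp
      next
        case False then have "evI SD J W = evI SD J A" using W(3) J by auto
        then show ?thesis using Psi_ev(2)[OF AL W(1) wfp J disj] eA_fix[OF J] by simp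
      qed
    qed
    then have "leq_Ldp SP SD A W" using A_lfp2 W(1) by (simp add: is_lfp_def)
    then show "evI SD I A \<subseteq> y" using Ldp_le[OF AL W(1)] I W(2) by blast
  qed
qed

lemma P2:
  assumes I: "I \<subseteq> SP" and ps: "partial_stable (Pow SD) (\<subseteq>) (PsiPI SD Prog I) (x,y)"
  shows "evI SD I A \<subseteq> x \<and> y \<subseteq> evI SD I A"
proof -
  have lx: "is_lfp (Pow SD) (\<subseteq>) (\<lambda>u. fst (PsiPI SD Prog I (u, y))) x"
   and ly: "is_lfp (Pow SD) (\<subseteq>) (\<lambda>u. snd (PsiPI SD Prog I (x, u))) y"
    using ps by (auto simp: partial_stable_def)
  obtain W1 where W1: "W1 \<in> Ldp SP SD" "evI SD I W1 = x" "\<forall>J\<subseteq>SP. J \<noteq> I \<longrightarrow> evI SD J W1 = evI SD J A"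
    using glue[OF fin AL I, of x] lx by (auto simp: is_lfp_def)
  obtain W2 where W2: "W2 \<in> Ldp SP SD" "evI SD I W2 = y" "\<forall>J\<subseteq>SP. J \<noteq> I \<longrightarrow> evI SD J W2 = evI SD J A"
    using glue[OF fin AL I, of y] ly by (auto simp: is_lfp_def)
  have fx: "fst (PsiPI SD Prog I (x, y)) = x" using lx by (simp add: is_lfp_def)
  have fy: "snd (PsiPI SD Prog I (x, y)) = y" using ly by (simp add: is_lfp_def)
  have "partial_stable (Ldp SP SD) (leq_Ldp SP SD) (PsiP SP SD Prog) (W1, W2)"
    unfolding partial_stable_def fst_conv snd_conv
  proof (intro conjI)
    show "is_lfp (Ldp SP SD) (leq_Ldp SP SD) (\<lambda>u. fst (PsiP SP SD Prog (u, W2))) W1"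
      unfolding is_lfp_def
    proof (intro conjI ballI impI)
      show "W1 \<in> Ldp SP SD" by (rule W1(1))
      show "fst (PsiP SP SD Prog (W1, W2)) = W1"
      proof (rule Ldp_eq[OF Psi_in(1)[OF W1(1) W2(1) wfp] W1(1)], intro allI impI)
        fix J assume J: "J \<subseteq> SP"
        show "evI SD J (fst (PsiP SP SD Prog (W1, W2))) = evI SD J W1"
        proof (cases "J = I")
          case True then show ?thesis using Psi_ev(1)[OF W1(1) W2(1) wfp J disj] W1(2) W2(2) fx by simp
        next
          case False then have "evI SD J W1 = evI SD J A" "evI SD J W2 = evI SD J A" using W1(3) W2(3) J by auto
          then show ?thesis using Psi_ev(1)[OF W1(1) W2(1) wfp J disj] eA_fix[OF J] by simp
        qed
      qed
      fix Z assume Z: "Z \<in> Ldp SP SD" and fz: "fst (PsiP SP SD Prog (Z, W2)) = Z"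
      show "leq_Ldp SP SD W1 Z" unfolding Ldp_le[OF W1(1) Z]
      proof (intro allI impI)
        fix J assume J: "J \<subseteq> SP"
        have eq: "fst (PsiPI SD Prog J (evI SD J Z, evI SD J W2)) = evI SD J Z"
          using Psi_ev(1)[OF Z W2(1) wfp J disj] fz by simp
        show "evI SD J W1 \<subseteq> evI SD J Z"
        proof (cases "J = I")
          case True
          then show ?thesis using lx eq W1 W2 evI_sub[of J Z] by (auto simp: is_lfp_def)
        next
          case False
          then show ?thesis using P1(1)[OF J] eq W1 W2 J evI_sub[of J Z] by (auto simp: is_lfp_def)
        qed
      qed
    qed
    show "is_lfp (Ldp SP SD) (leq_Ldp SP SD) (\<lambda>u. snd (PsiP SP SD Prog (W1, u))) W2"
      unfolding is_lfp_def
    proof (intro conjI ballI impI)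
      show "W2 \<in> Ldp SP SD" by (rule W2(1))
      show "snd (PsiP SP SD Prog (W1, W2)) = W2"
      proof (rule Ldp_eq[OF Psi_in(2)[OF W1(1) W2(1) wfp] W2(1)], intro allI impI)
        fix J assume J: "J \<subseteq> SP"
        show "evI SD J (snd (PsiP SP SD Prog (W1, W2))) = evI SD J W2"
        proof (cases "J = I")
          case True then show ?thesis using Psi_ev(2)[OF W1(1) W2(1) wfp J disj] W1(2) W2(2) fy by simp
        next
          case False then have "evI SD J W1 = evI SD J A" "evI SD J W2 = evI SD J A" using W1(3) W2(3) J by auto
          then show ?thesis using Psi_ev(2)[OF W1(1) W2(1) wfp J disj] eA_fix[OF J] by simp
        qed
      qed
      fix Z assume Z: "Z \<in> Ldp SP SD" and fz: "snd (PsiP SP SD Prog (W1, Z)) = Z"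
      show "leq_Ldp SP SD W2 Z" unfolding Ldp_le[OF W2(1) Z]
      proof (intro allI impI)
        fix J assume J: "J \<subseteq> SP"
        have eq: "snd (PsiPI SD Prog J (evI SD J W1, evI SD J Z)) = evI SD J Z"
          using Psi_ev(2)[OF W1(1) Z wfp J disj] fz by simp
        show "evI SD J W2 \<subseteq> evI SD J Z"
        proof (cases "J = I")
          case True
          then show ?thesis using ly eq W1 W2 evI_sub[of J Z] by (auto simp: is_lfp_def)
        next
          case False
          then show ?thesis using P1(2)[OF J] eq W1 W2 J evI_sub[of J Z] by (auto simp: is_lfp_def)
        qed
      qed
    qed
  qed
  then have "prec_le (leq_Ldp SP SD) (A,A) (W1,W2)" by (rule A_least)
  then have "leq_Ldp SP SD A W1" "leq_Ldp SP SD W2 A" by (auto simp: prec_le_def)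
  then show ?thesis using Ldp_le[OF AL W1(1)] Ldp_le[OF W2(1) AL] I W1(2) W2(2) by blast
qed

lemma wfI: "I \<subseteq> SP \<Longrightarrow> well_founded_fp (Pow SD) (\<subseteq>) (PsiPI SD Prog I) (evI SD I A, evI SD I A)"
  unfolding well_founded_fp_def
  using P1 P2 by (auto simp: partial_stable_def prec_le_def)

end

lemma wf_unique:
  "well_founded_fp C (\<subseteq>) B p \<Longrightarrow> well_founded_fp C (\<subseteq>) B q \<Longrightarrow> p = q"
  unfolding well_founded_fp_def prec_le_def by (metis prod.collapse subset_antisym)


theorem theorem4p11:
  fixes SP SD :: "'a set" and Prog :: "'a program" and A :: "'a \<Rightarrow> 'a form set"
  assumes "finite SP" and "finite SD" and "SP \<inter> SD = {}"
    and "wf_program SP SD Prog"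
    and "A \<in> Ldp SP SD"
    and "param_wf_model SP SD Prog (A, A)"
  shows "\<forall>J \<subseteq> SP \<union> SD. wf_models SP SD Prog J \<longleftrightarrow> models_Th SD J A"
proof (intro allI impI)
  fix J assume J: "J \<subseteq> SP \<union> SD"
  define I where "I = J \<inter> SP"
  have I: "I \<subseteq> SP" by (simp add: I_def)
  have w: "well_founded_fp (Pow SD) (\<subseteq>) (PsiPI SD Prog I) (evI SD I A, evI SD I A)"
    using wfI[OF assms(1,3,4,5,6) I] .
  have "wf_models SP SD Prog J \<longleftrightarrow> J \<inter> SD = evI SD I A"
  proof
    assume "wf_models SP SD Prog J"
    then have "well_founded_fp (Pow SD) (\<subseteq>) (PsiPI SD Prog I) (J \<inter> SD, J \<inter> SD)"
      by (simp add: wf_models_def I_def)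
    then show "J \<inter> SD = evI SD I A" using wf_unique w by blast
  next
    assume "J \<inter> SD = evI SD I A"
    then show "wf_models SP SD Prog J" using w by (simp add: wf_models_def I_def)
  qed
  moreover have "models_Th SD J A \<longleftrightarrow> J \<inter> SD = evI SD I A"
  proof -
    have "q \<in> SD \<Longrightarrow> sem J (rep (A q)) = sem I (rep (A q))" for q
      using Ldp_rep[OF assms(5), of q] sem_restrict I_def by metis
    then show ?thesis by (auto simp: models_Th_def evI_def)
  qed
  ultimately show "wf_models SP SD Prog J \<longleftrightarrow> models_Th SD J A" by simp
qed

end
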